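(* Let $n$ be a positive even integer and $m = n^2+1$. Let $Q_n = (a_{i,j})_{1\le i,j\le n}$ be the $n\times n$ matrix with entries in $\mathbb{Z}/m\mathbb{Z}$ given by $a_{i,j} = j + (i-1)n$, and let $\rho(Q_n)$ be the $n\times n$ matrix whose $(i,j)$ entry is $a_{j,n-i+1}$. Writing $\left(\frac{A}{m}\right)$ for the matrix obtained by applying the Jacobi symbol $\left(\frac{\cdot}{m}\right)$ to each entry of $A$, we have $$\left(\frac{\rho(Q_n)}{m}\right) = \begin{cases} \left(\frac{Q_n}{m}\right) & \text{if } n\equiv 0 \pmod 4,\\ -\left(\frac{Q_n}{m}\right) & \text{if } n\equiv 2\pmod 4.\end{cases}$$
   Context: For odd $m>2$ with prime factorization $m=\prod_{k=1}^K p_k$ (primes not necessarily distinct), the Jacobi symbol is $\left(\frac{a}{m}\right)=\prod_{k=1}^K \left(\frac{a}{p_k}\right)$, where $\left(\frac{a}{p}\right)$ is the Legendre symbol; it is well-defined on $\mathbb{Z}/m\mathbb{Z}$. *)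

theory Defs
  imports "HOL-Number_Theory.Number_Theory"
begin

definition Jacobi :: "int \<Rightarrow> nat \<Rightarrow> int" where
  "Jacobi a m = (\<Prod>p \<in># prime_factorization m. Legendre a (int p))"

text \<open>Entries of Q_n (1-indexed): a_{i,j} = j + (i-1) n, as an integer representative
  of a residue modulo m = n^2+1 (the Jacobi symbol only depends on the residue).\<close>
definition Qn :: "nat \<Rightarrow> nat \<Rightarrow> nat \<Rightarrow> int" where
  "Qn n i j = int j + (int i - 1) * int n"

definition rhoQn :: "nat \<Rightarrow> nat \<Rightarrow> nat \<Rightarrow> int" where
  "rhoQn n i j = Qn n j (n - i + 1)"

end

theory Submission
  imports Defs
begin

lemma small_cong_eq:
  fixes x y :: int and p :: nat
  assumes "x \<in> {-1,0,1}" "y \<in> {-1,0,1}" "[x = y] (mod int p)" "p > 2"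
  shows "x = y"
proof (rule ccontr)
  assume ne: "x \<noteq> y"
  have d: "int p dvd (x - y)" using assms(3) by (simp add: cong_iff_dvd_diff)
  have "x - y \<in> {-2,-1,1,2}" using assms(1,2) ne by auto
  then have "int p dvd 1 \<or> int p dvd 2" using d
    by (metis dvd_minus_iff empty_iff insert_iff minus_minus)
  then have "p dvd 1 \<or> p dvd 2"
    by (metis int_dvd_int_iff of_nat_1 of_nat_numeral)
  then have "p \<le> 2" using dvd_imp_le by fastforce
  then show False using assms(4) by simp
qed

lemma Legendre_range: "Legendre a p \<in> {-1,0,1}"
  by (auto simp: Legendre_def)

lemma Legendre_mult:
  assumes "prime p" "p > 2"
  shows "Legendre (a*b) (int p) = Legendre a (int p) * Legendre b (int p)"
proof -
  have c1: "[Legendre (a*b) (int p) = (a*b) ^ ((p - 1) div 2)] (mod int p)"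
    by (rule euler_criterion[OF assms])
  have c2: "[Legendre a (int p) * Legendre b (int p) = a ^ ((p - 1) div 2) * b ^ ((p - 1) div 2)] (mod int p)"
    by (rule cong_mult[OF euler_criterion[OF assms] euler_criterion[OF assms]])
  have c3: "[Legendre (a*b) (int p) = Legendre a (int p) * Legendre b (int p)] (mod int p)"
  proof -
    have "(a*b) ^ ((p - 1) div 2) = a ^ ((p - 1) div 2) * b ^ ((p - 1) div 2)"
      by (rule power_mult_distrib)
    from this have c1': "[Legendre (a*b) (int p) = a ^ ((p - 1) div 2) * b ^ ((p - 1) div 2)] (mod int p)"
      using c1 by simp
    show ?thesis by (rule cong_trans[OF c1' cong_sym[OF c2]])
  qed
  have r: "Legendre a (int p) * Legendre b (int p) \<in> {-1,0,1}"
    using Legendre_range[of a "int p"] Legendre_range[of b "int p"] by auto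
  show ?thesis by (rule small_cong_eq[OF Legendre_range r c3 assms(2)])
qed

lemma Legendre_cong:
  assumes "prime p" "p > 2" "[a = b] (mod int p)"
  shows "Legendre a (int p) = Legendre b (int p)"
proof -
  have c1: "[Legendre a (int p) = a ^ ((p - 1) div 2)] (mod int p)"
    by (rule euler_criterion[OF assms(1,2)])
  have c2: "[Legendre b (int p) = b ^ ((p - 1) div 2)] (mod int p)"
    by (rule euler_criterion[OF assms(1,2)])
  have c3: "[a ^ ((p - 1) div 2) = b ^ ((p - 1) div 2)] (mod int p)"
    by (rule cong_pow[OF assms(3)])
  have "[Legendre a (int p) = Legendre b (int p)] (mod int p)"
    by (rule cong_trans[OF cong_trans[OF c1 c3] cong_sym[OF c2]])
  then show ?thesis by (rule small_cong_eq[OF Legendre_range Legendre_range _ assms(2)])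
qed

lemma odd_prime_factor:
  fixes m p :: nat
  assumes "odd m" "p \<in> prime_factors m"
  shows "prime p" "p > 2"
proof -
  show pr: "prime p" using assms(2) by (simp add: in_prime_factors_iff)
  have "p dvd m" using assms(2) by (simp add: in_prime_factors_iff)
  then have "p \<noteq> 2" using assms(1) by auto
  moreover have "p \<ge> 2" using pr by (rule prime_ge_2_nat)
  ultimately show "p > 2" by simp
qed

lemma Jacobi_mult:
  fixes m :: nat
  assumes "odd m"
  shows "Jacobi (a*b) m = Jacobi a m * Jacobi b m"
proof -
  have "image_mset (\<lambda>p. Legendre (a*b) (int p)) (prime_factorization m)
      = image_mset (\<lambda>p. Legendre a (int p) * Legendre b (int p)) (prime_factorization m)"
  proof (rule image_mset_cong)
    fix p assume "p \<in># prime_factorization m"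
    then show "Legendre (a*b) (int p) = Legendre a (int p) * Legendre b (int p)"
      using Legendre_mult odd_prime_factor[OF assms] by simp
  qed
  then show ?thesis unfolding Jacobi_def by (simp add: prod_mset.distrib)
qed

lemma Jacobi_cong:
  fixes m :: nat
  assumes "odd m" "[a = b] (mod int m)"
  shows "Jacobi a m = Jacobi b m"
  unfolding Jacobi_def
proof (rule arg_cong[where f = prod_mset], rule image_mset_cong)
  fix p assume p: "p \<in># prime_factorization m"
  then have "[a = b] (mod int p)" using assms(2)
    by (metis cong_dvd_modulus int_dvd_int_iff in_prime_factors_imp_dvd)
  then show "Legendre a (int p) = Legendre b (int p)"
    using Legendre_cong odd_prime_factor[OF assms(1)] p by auto
qed

lemma Legendre_sqrt_minus1:
  fixes p n :: nat
  assumes p: "prime p" "p > 2" and dv: "p dvd n^2 + 1"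
  shows "p mod 4 = 1 \<and> Legendre (int n) (int p) = (if p mod 8 = 1 then 1 else -1)"
proof -
  define P where "P = int p"
  have h1: "[int n ^ 2 = -1] (mod P)"
    using dv unfolding P_def cong_iff_dvd_diff
    by (metis diff_minus_eq_add int_dvd_int_iff of_nat_1 of_nat_add of_nat_power)
  have h2: "\<not> p dvd n"
  proof
    assume "p dvd n"
    then have "p dvd n^2" by (simp add: power2_eq_square)
    then have "p dvd 1" using dv by (metis dvd_add_right_iff)
    then show False using p by auto
  qed
  have "[n ^ (p-1) = 1] (mod p)" using fermat_theorem[OF p(1) h2] .
  then have h3: "[int n ^ (p-1) = 1] (mod P)" unfolding P_def
    by (metis cong_int_iff of_nat_1 of_nat_power)
  define e where "e = (p - 1) div 2"
  have oddp: "odd p" using p prime_odd_nat by blast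
  then have pe: "p - 1 = 2 * e" unfolding e_def by presburger
  have not2: "\<not> [1 = -1] (mod P)"
  proof
    assume "[1 = -1] (mod P)"
    then have "P dvd 2" by (simp add: cong_iff_dvd_diff)
    then have "p dvd 2" unfolding P_def by (metis int_dvd_int_iff of_nat_numeral)
    then show False using p by (simp add: nat_dvd_not_less)
  qed
  have ee: "even e"
  proof (rule ccontr)
    assume oe: "odd e"
    have "[int n ^ (p-1) = (int n ^ 2) ^ e] (mod P)" unfolding pe by (simp add: power_mult)
    moreover have "[(int n ^ 2) ^ e = (-1) ^ e] (mod P)" using h1 cong_pow by blast
    ultimately have "[1 = (-1::int) ^ e] (mod P)" using h3 by (meson cong_sym cong_trans)
    then show False using oe not2 by simp
  qed
  define f where "f = e div 2"
  have ef: "e = 2 * f" using ee unfolding f_def by presburger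
  have "[Legendre (int n) P = int n ^ e] (mod P)" unfolding P_def e_def
    using euler_criterion p by blast
  moreover have "[int n ^ e = (-1) ^ f] (mod P)" unfolding ef power_mult using h1 cong_pow by blast
  ultimately have "[Legendre (int n) P = (-1) ^ f] (mod P)" using cong_trans by blast
  moreover have "(-1::int) ^ f \<in> {-1,0,1}" by (cases "even f") auto
  ultimately have L: "Legendre (int n) P = (-1) ^ f"
    using small_cong_eq[of _ _ p] Legendre_range p unfolding P_def by blast
  have pf: "p = 4 * f + 1" using pe ef p by linarith
  show ?thesis
  proof (cases "even f")
    case True
    then obtain g where g: "f = 2 * g" by blast
    have "p mod 4 = 1" "p mod 8 = 1" using pf g by presburger+
    moreover have "(-1::int)^f = 1" using True by simp
    ultimately show ?thesis using L unfolding P_def by simp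
  next
    case False
    then obtain g where g: "f = 2 * g + 1" using oddE by blast
    have "p mod 4 = 1" "p mod 8 = 5" using pf g by presburger+
    moreover have "(-1::int)^f = -1" using False by simp
    ultimately show ?thesis using L unfolding P_def by simp
  qed
qed

lemma prod_sign_mset:
  fixes M :: "nat multiset"
  assumes "\<forall>p\<in>#M. p mod 4 = 1"
  shows "prod_mset (image_mset (\<lambda>p. if p mod 8 = 1 then 1 else (-1::int)) M)
           = (if prod_mset M mod 8 = 1 then 1 else -1) \<and> prod_mset M mod 4 = 1"
  using assms
proof (induction M)
  case empty
  then show ?case by simp
next
  case (add x M)
  have x: "x mod 8 = 1 \<or> x mod 8 = 5" using add.prems by auto presburger
  have IH: "prod_mset (image_mset (\<lambda>p. if p mod 8 = 1 then 1 else (-1::int)) M)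
           = (if prod_mset M mod 8 = 1 then 1 else -1)" "prod_mset M mod 4 = 1"
    using add by auto
  then have Mm: "prod_mset M mod 8 = 1 \<or> prod_mset M mod 8 = 5" by presburger
  have eq: "(x * prod_mset M) mod 8 = ((x mod 8) * (prod_mset M mod 8)) mod 8"
    by (simp add: mod_mult_eq)
  have eq4: "(x * prod_mset M) mod 4 = ((x mod 4) * (prod_mset M mod 4)) mod 4"
    by (simp add: mod_mult_eq)
  have x4: "x mod 4 = 1" using add.prems by auto
  show ?case using x Mm IH eq eq4 x4 by auto
qed

lemma Jacobi_n:
  fixes n :: nat
  assumes "n > 0" "even n"
  shows "Jacobi (int n) (n^2+1) = (if n mod 4 = 0 then 1 else -1)"
proof -
  define m where "m = n^2 + 1"
  have oddm: "odd m" using assms unfolding m_def by simp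
  have pf: "\<forall>p\<in>#prime_factorization m. p mod 4 = 1 \<and>
      Legendre (int n) (int p) = (if p mod 8 = 1 then 1 else -1)"
  proof
    fix p assume pm: "p \<in># prime_factorization m"
    show "p mod 4 = 1 \<and> Legendre (int n) (int p) = (if p mod 8 = 1 then 1 else -1)"
      using Legendre_sqrt_minus1[of p n] odd_prime_factor[OF oddm] pm
      by (metis in_prime_factors_imp_dvd m_def)
  qed
  have "Jacobi (int n) m = prod_mset (image_mset (\<lambda>p. if p mod 8 = 1 then 1 else (-1::int)) (prime_factorization m))"
    unfolding Jacobi_def by (rule arg_cong[where f = prod_mset], rule image_mset_cong) (use pf in auto)
  also have "\<dots> = (if prod_mset (prime_factorization m) mod 8 = 1 then 1 else -1)"
    using prod_sign_mset[of "prime_factorization m"] pf by auto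
  also have "prod_mset (prime_factorization m) = m"
    using oddm by (metis prod_mset_prime_factorization_nat odd_pos neq0_conv)
  finally have J: "Jacobi (int n) m = (if m mod 8 = 1 then 1 else -1)" .
  have "m mod 8 = 1 \<longleftrightarrow> n mod 4 = 0"
  proof (cases "n mod 4 = 0")
    case True
    then obtain s where s: "n = 4 * s" by auto
    have m16: "m = 16 * (s*s) + 1" unfolding m_def s by (simp add: power2_eq_square algebra_simps)
    have "\<And>k::nat. (16*k+1) mod 8 = 1" by presburger
    then have "m mod 8 = 1" using m16 by metis
    then show ?thesis using True by simp
  next
    case False
    then have "n mod 4 = 2" using assms by presburger
    then obtain s where s: "n = 4 * s + 2" by (metis div_mult_mod_eq mult.commute)
    have "m = 8 * (2*s*s + 2*s) + 5" unfolding m_def s by (simp add: power2_eq_square algebra_simps)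
    moreover have "\<And>a::nat. (8 * a + 5) mod 8 = 5" by presburger
    ultimately have "m mod 8 = 5" by metis
    then show ?thesis using False by simp
  qed
  then show ?thesis using J unfolding m_def by simp
qed

theorem theorem3:
  fixes n :: nat
  assumes "n > 0" and "even n"
  defines "m \<equiv> n^2 + 1"
  shows "\<forall>i\<in>{1..n}. \<forall>j\<in>{1..n}.
           Jacobi (rhoQn n i j) m =
             (if n mod 4 = 0 then Jacobi (Qn n i j) m else - Jacobi (Qn n i j) m)"
proof (intro ballI)
  fix i j assume i: "i \<in> {1..n}" and j: "j \<in> {1..n}"
  have oddm: "odd m" using assms unfolding m_def by simp
  have r: "rhoQn n i j = int j * int n - int i + 1"
    using i unfolding rhoQn_def Qn_def by (simp add: of_nat_diff algebra_simps)
  have "int n * Qn n i j - rhoQn n i j = (int i - 1) * int m"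
    unfolding r unfolding Qn_def m_def by (simp add: power2_eq_square algebra_simps)
  then have "[rhoQn n i j = int n * Qn n i j] (mod int m)"
    by (metis cong_iff_dvd_diff cong_sym dvd_triv_right)
  then have "Jacobi (rhoQn n i j) m = Jacobi (int n) m * Jacobi (Qn n i j) m"
    using Jacobi_cong[OF oddm] Jacobi_mult[OF oddm] by metis
  then show "Jacobi (rhoQn n i j) m =
             (if n mod 4 = 0 then Jacobi (Qn n i j) m else - Jacobi (Qn n i j) m)"
    using Jacobi_n[OF assms(1,2)] unfolding m_def by simp
qed

end
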